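(* Let $C=\{x_0(x_1+x_2)+(x_1-x_2)^2=0\}\subset\mathbb{P}^2$. Then: $C$ is strongly concise; $(0:1:1)$ is the only point of $\{x_0=0\}$ with $\operatorname{Hrk}_C=1$; every point $(0:s:t)$ with $(s:t)\notin\{(1:1),(1:-1)\}$ has $\operatorname{Hrk}_C=2$; and the point $(0:1:-1)$ has $\operatorname{Hrk}_C((0:1:-1))=3$ while $\underline{\operatorname{Hrk}}_C((0:1:-1))=2$ (as $C^{\star2}=\mathbb{P}^2$).
   Context: Coordinates $x_0,x_1,x_2$ on $\mathbb{P}^2$, $H_i=\{x_i=0\}$. Hadamard product: $(p_0:p_1:p_2)\star(q_0:q_1:q_2)=(p_0q_0:p_1q_1:p_2q_2)$, defined when not all $p_iq_i$ vanish. $\operatorname{Hrk}_C(q)=\min\{m\mid q=p_1\star\cdots\star p_m,\ p_i\in C\}$. $C\star C$ is the Zariski closure of all defined products of two points of $C$, $C^{\star2}=C\star C$. Border rank $\underline{\operatorname{Hrk}}_C(p)=\min\{m\mid p\in C^{\star m}\}$ where $C^{\star1}=C$. $C$ is strongly concise if for every $i$, $(C\cap H_i)\not\subset\bigcup_{j\ne i}H_j$. *)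

theory Defs
  imports Complex_Main "HOL-Library.Extended_Nat"
begin

text \<open>Points of P^2 over the complex numbers are represented by nonzero
homogeneous coordinate vectors; subsets of P^2 by sets of nonzero vectors
closed under nonzero scaling (cones).\<close>

type_synonym v3 = "complex \<times> complex \<times> complex"

definition coord :: "v3 \<Rightarrow> nat \<Rightarrow> complex" where
  "coord v i = (case v of (a, b, c) \<Rightarrow> (if i = 0 then a else if i = 1 then b else c))"

definition smul :: "complex \<Rightarrow> v3 \<Rightarrow> v3" where
  "smul t v = (case v of (a, b, c) \<Rightarrow> (t * a, t * b, t * c))"

definition peq :: "v3 \<Rightarrow> v3 \<Rightarrow> bool" where
  "peq u v \<longleftrightarrow> u \<noteq> (0,0,0) \<and> v \<noteq> (0,0,0) \<and> (\<exists>t. t \<noteq> 0 \<and> u = smul t v)"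

text \<open>Coordinatewise (Hadamard) product of representatives; the projective
product is defined exactly when this is nonzero.\<close>
definition hmul :: "v3 \<Rightarrow> v3 \<Rightarrow> v3" where
  "hmul u v = (case u of (a, b, c) \<Rightarrow> case v of (a', b', c') \<Rightarrow> (a * a', b * b', c * c'))"

definition hprod_list :: "v3 list \<Rightarrow> v3" where
  "hprod_list ps = foldr hmul ps (1, 1, 1)"

definition hyp :: "nat \<Rightarrow> v3 set" where
  "hyp i = {v. v \<noteq> (0,0,0) \<and> coord v i = 0}"

text \<open>Homogeneous polynomials of degree d in x0,x1,x2: the coefficient function
c i j is the coefficient of x0^i x1^j x2^(d-i-j).\<close>
definition heval :: "nat \<Rightarrow> (nat \<Rightarrow> nat \<Rightarrow> complex) \<Rightarrow> v3 \<Rightarrow> complex" where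
  "heval d c v = (\<Sum>i\<le>d. \<Sum>j\<le>d - i. c i j * coord v 0 ^ i * coord v 1 ^ j * coord v 2 ^ (d - i - j))"

definition zclosure :: "v3 set \<Rightarrow> v3 set" where
  "zclosure S = {v. v \<noteq> (0,0,0) \<and> (\<forall>d c. (\<forall>s\<in>S. heval d c s = 0) \<longrightarrow> heval d c v = 0)}"

definition hstar :: "v3 set \<Rightarrow> v3 set \<Rightarrow> v3 set" where
  "hstar X Y = zclosure {hmul p q | p q. p \<in> X \<and> q \<in> Y \<and> hmul p q \<noteq> (0,0,0)}"

fun hpow :: "v3 set \<Rightarrow> nat \<Rightarrow> v3 set" where
  "hpow C 0 = UNIV"
| "hpow C (Suc 0) = C"
| "hpow C (Suc (Suc m)) = hstar (hpow C (Suc m)) C"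

text \<open>Hadamard rank (infinity if no decomposition exists).\<close>
definition Hrk :: "v3 set \<Rightarrow> v3 \<Rightarrow> enat" where
  "Hrk C q = (INF m \<in> {m. m \<ge> 1 \<and> (\<exists>ps. length ps = m \<and> set ps \<subseteq> C \<and> peq q (hprod_list ps))}. enat m)"

definition bHrk :: "v3 set \<Rightarrow> v3 \<Rightarrow> enat" where
  "bHrk C q = (INF m \<in> {m. m \<ge> 1 \<and> q \<in> hpow C m}. enat m)"

definition strongly_concise :: "v3 set \<Rightarrow> bool" where
  "strongly_concise C \<longleftrightarrow> (\<forall>i\<le>2. \<not> (C \<inter> hyp i \<subseteq> (\<Union>j\<in>{0,1,2} - {i}. hyp j)))"

definition projP2 :: "v3 set" where
  "projP2 = {v. v \<noteq> (0,0,0)}"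

definition curveC :: "v3 set" where
  "curveC = {(a, b, c). (a, b, c) \<noteq> (0,0,0) \<and> a * (b + c) + (b - c)^2 = 0}"

end

theory Submission imports Defs "HOL-Computational_Algebra.Fundamental_Theorem_Algebra" begin

lemma quartic_root:
  fixes x y z :: complex assumes "z \<noteq> 0"
  shows "\<exists>m. (m-1)^2*(y-z*m)^2 - x*m*(y+z*m)*(m+1) = 0"
proof -
  define P where "P = [: y^2, -2*y^2-2*y*z - x*y, y^2+4*y*z+z^2 - x*(y+z), -2*y*z-2*z^2 - x*z, z^2 :]"
  have ev: "poly P m = (m-1)^2*(y-z*m)^2 - x*m*(y+z*m)*(m+1)" for m
    unfolding P_def by (simp add: algebra_simps power2_eq_square)
  have "degree P = 4" using assms unfolding P_def by simp
  hence "\<not> constant (poly P)" by (simp add: constant_degree)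
  then obtain m where "poly P m = 0" using fundamental_theorem_of_algebra by blast
  thus ?thesis using ev by auto
qed

lemma torus_prod:
  fixes x y z :: complex
  assumes "x \<noteq> 0" "y \<noteq> 0" "z \<noteq> 0" "y + z \<noteq> 0"
  shows "\<exists>p q. p \<in> curveC \<and> q \<in> curveC \<and> hmul p q = (x,y,z)"
proof -
  obtain m where Q: "(m-1)^2*(y-z*m)^2 - x*m*(y+z*m)*(m+1) = 0"
    using quartic_root assms by blast
  have m0: "m \<noteq> 0" using Q assms by auto
  have m1: "y - z*m \<noteq> 0"
  proof
    assume h: "y - z*m = 0"
    hence hy: "z*m = y" by simp
    have "z*(m+1) = y + z" using hy by (simp add: algebra_simps)
    hence "m + 1 \<noteq> 0" using assms by auto
    moreover have "y + z*m = 2*y" using hy by simp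
    moreover have "x*m*(y+z*m)*(m+1) = 0" using Q h by simp
    ultimately show False using assms m0 by simp
  qed
  have m2: "y + z*m \<noteq> 0"
  proof
    assume h: "y + z*m = 0"
    hence hy: "z*m = -y" by (simp add: eq_neg_iff_add_eq_0 add.commute)
    have "z*(m-1) = -(y + z)" using hy by (simp add: algebra_simps)
    hence "m - 1 \<noteq> 0" using assms by auto
    moreover have "(m-1)^2*(y-z*m)^2 = 0" using Q h by simp
    ultimately show False using m1 by simp
  qed
  define \<alpha> where "\<alpha> = -x*m*(y+z*m)/(y-z*m)^2"
  have a0: "\<alpha> \<noteq> 0" using assms m0 m1 m2 by (simp add: \<alpha>_def)
  have pC: "(\<alpha>, m, 1) \<in> curveC"
  proof -
    have "\<alpha>*(m+1) + (m-1)^2 = ((m-1)^2*(y-z*m)^2 - x*m*(y+z*m)*(m+1)) / (y-z*m)^2"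
      using m1 by (simp add: \<alpha>_def field_simps)
    thus ?thesis using Q by (simp add: curveC_def)
  qed
  have qC: "(x/\<alpha>, y/m, z) \<in> curveC"
  proof -
    have "x/\<alpha>*(y/m+z) + (y/m-z)^2 = (x*m*(y+z*m) + \<alpha>*(y-z*m)^2)/(\<alpha>*m^2)"
      using a0 m0 by (simp add: field_simps power2_eq_square)
    also have "x*m*(y+z*m) + \<alpha>*(y-z*m)^2 = 0" using m1 by (simp add: \<alpha>_def)
    finally show ?thesis using assms by (simp add: curveC_def)
  qed
  have "hmul (\<alpha>, m, 1) (x/\<alpha>, y/m, z) = (x,y,z)" using a0 m0 by (simp add: hmul_def)
  thus ?thesis using pC qC by blast
qed

lemma ev_ne: fixes a k :: complex assumes "k \<noteq> 0" shows "eventually (\<lambda>e. a + k*e \<noteq> 0) (at 0)"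
proof (cases "a = 0")
  case True thus ?thesis using assms by (simp add: eventually_at_filter)
next
  case False
  have "((\<lambda>e. a + k*e) \<longlongrightarrow> a + k*0) (at 0)" by (intro tendsto_intros)
  thus ?thesis using False by (simp add: tendsto_imp_eventually_ne)
qed

lemma dense_vanish:
  assumes "\<And>x y z. x \<noteq> 0 \<Longrightarrow> y \<noteq> 0 \<Longrightarrow> z \<noteq> 0 \<Longrightarrow> y + z \<noteq> 0 \<Longrightarrow> heval d c (x,y,z) = 0"
  shows "heval d c (x,y,z) = 0"
proof -
  define g where "g = (\<lambda>e::complex. heval d c (x+e, y+e, z+2*e))"
  have cont: "isCont g 0"
    unfolding g_def heval_def coord_def by (simp; intro continuous_intros)
  have ev: "eventually (\<lambda>e. g e = 0) (at 0)"
  proof -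
    have "eventually (\<lambda>e. x + 1*e \<noteq> 0 \<and> y + 1*e \<noteq> 0 \<and> z + 2*e \<noteq> 0 \<and> (y+z) + 3*e \<noteq> 0) (at 0)"
      by (intro eventually_conj ev_ne) auto
    thus ?thesis
      by eventually_elim (auto simp: g_def intro!: assms simp: algebra_simps)
  qed
  have "(g \<longlongrightarrow> g 0) (at 0)" using cont by (simp add: isCont_def)
  moreover have "(g \<longlongrightarrow> 0) (at 0)" using ev by (simp add: tendsto_eventually)
  ultimately have "g 0 = 0" by (rule tendsto_unique[rotated]) simp
  thus ?thesis by (simp add: g_def)
qed


lemma hstar_CC: "hstar curveC curveC = projP2"
proof
  show "hstar curveC curveC \<subseteq> projP2" by (auto simp: hstar_def zclosure_def projP2_def)
next
  show "projP2 \<subseteq> hstar curveC curveC"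
  proof
    fix v assume v: "v \<in> projP2"
    obtain x y z where vv: "v = (x,y,z)" by (cases v) auto
    show "v \<in> hstar curveC curveC"
      unfolding hstar_def zclosure_def
    proof (intro CollectI conjI allI impI)
      show "v \<noteq> (0,0,0)" using v by (simp add: projP2_def)
    next
      fix d c
      assume H: "\<forall>s\<in>{hmul p q |p q. p \<in> curveC \<and> q \<in> curveC \<and> hmul p q \<noteq> (0, 0, 0)}. heval d c s = 0"
      have H': "\<And>p q. p \<in> curveC \<Longrightarrow> q \<in> curveC \<Longrightarrow> hmul p q \<noteq> (0,0,0) \<Longrightarrow> heval d c (hmul p q) = 0"
        using H by blast
      have "heval d c (x,y,z) = 0"
      proof (rule dense_vanish)
        fix x' y' z' :: complex
        assume "x' \<noteq> 0" "y' \<noteq> 0" "z' \<noteq> 0" "y' + z' \<noteq> 0"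
        then obtain p q where "p \<in> curveC" "q \<in> curveC" "hmul p q = (x',y',z')"
          using torus_prod by blast
        moreover have "hmul p q \<noteq> (0,0,0)" using \<open>x' \<noteq> 0\<close> \<open>hmul p q = (x',y',z')\<close> by simp
        ultimately have "heval d c (hmul p q) = 0" using H' by blast
        thus "heval d c (x',y',z') = 0" using \<open>hmul p q = (x',y',z')\<close> by simp
      qed
      thus "heval d c v = 0" using vv by simp
    qed
  qed
qed

lemma hprod1: "hprod_list [p] = p"
  by (cases p) (simp add: hprod_list_def hmul_def)
lemma hprod2: "hprod_list [p,q] = hmul p q"
  by (cases p; cases q) (simp add: hprod_list_def hmul_def)
lemma hprod3: "hprod_list [p,q,r] = hmul p (hmul q r)"
  by (cases p; cases q; cases r) (simp add: hprod_list_def hmul_def)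

lemma INF_enat_eq:
  assumes "n \<in> A" "\<forall>m\<in>A. n \<le> m" shows "(INF m\<in>A. enat m) = enat n"
  using assms by (intro antisym) (auto intro!: INF_lower2 INF_greatest)

lemma INF_enat_ge:
  assumes "\<forall>m\<in>A. n \<le> m" shows "enat n \<le> (INF m\<in>A. enat m)"
  using assms by (auto intro!: INF_greatest)

lemma rank1_H0:
  assumes "peq v p" "p \<in> curveC" "coord v 0 = 0"
  shows "peq v (0,1,1)"
proof -
  obtain a b c where p: "p = (a,b,c)" by (cases p) auto
  obtain t where t: "t \<noteq> 0" "v = smul t p" "v \<noteq> (0,0,0)" using assms(1) by (auto simp: peq_def)
  have "t*a = 0" using assms(3) t p by (simp add: smul_def coord_def)
  hence a: "a = 0" using t by simp
  hence "(b-c)^2 = 0" using assms(2) p by (simp add: curveC_def)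
  hence bc: "b = c" by simp
  have "v = smul (t*b) (0,1,1)" using t p a bc by (simp add: smul_def)
  moreover have "t*b \<noteq> 0" using t p a bc assms(2) by (auto simp: curveC_def)
  moreover have "(0::complex,1::complex,1::complex) \<noteq> (0,0,0)" by simp
  ultimately show ?thesis using t unfolding peq_def by blast
qed

lemma not_rank2_1m1:
  assumes "p \<in> curveC" "q \<in> curveC" "peq (0,1,-1) (hmul p q)"
  shows False
proof -
  obtain a b c where p: "p = (a,b,c)" by (cases p) auto
  obtain a' b' c' where q: "q = (a',b',c')" by (cases q) auto
  obtain t where t: "t \<noteq> 0" "(0,1,-1) = smul t (hmul p q)" using assms(3) by (auto simp: peq_def)
  have e: "t*(a*a') = 0" "t*(b*b') = 1" "t*(c*c') = -1" using t p q by (auto simp: smul_def hmul_def)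
  have Cp: "a*(b+c) + (b-c)^2 = 0" and Cq: "a'*(b'+c') + (b'-c')^2 = 0"
    using assms p q by (auto simp: curveC_def)
  have "a = 0 \<or> a' = 0" using e t by simp
  thus False
  proof
    assume a: "a = 0"
    hence "b = c" using Cp by simp
    hence "t*b*(b'+c') = 0" using e by (simp add: algebra_simps)
    moreover have "t*b \<noteq> 0" using e by auto
    ultimately have "b' = -c'" by (simp add: eq_neg_iff_add_eq_0)
    hence "(2*b')^2 = 0" using Cq by (simp add: algebra_simps power2_eq_square)
    thus False using e by simp
  next
    assume a: "a' = 0"
    hence "b' = c'" using Cq by simp
    hence "t*b'*(b+c) = 0" using e by (simp add: algebra_simps)
    moreover have "t*b' \<noteq> 0" using e by auto
    ultimately have "b = -c" by (simp add: eq_neg_iff_add_eq_0)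
    hence "(2*b)^2 = 0" using Cp by (simp add: algebra_simps power2_eq_square)
    thus False using e by simp
  qed
qed

lemma peq_refl: "v \<noteq> (0,0,0) \<Longrightarrow> peq v v"
  by (cases v) (auto simp: peq_def smul_def intro!: exI[of _ 1])

theorem mainTheorem13:
  shows "strongly_concise curveC
    \<and> (\<forall>v\<in>hyp 0. Hrk curveC v = 1 \<longleftrightarrow> peq v (0, 1, 1))
    \<and> (\<forall>s t. (s, t) \<noteq> (0, 0) \<and> \<not> peq (0, s, t) (0, 1, 1) \<and> \<not> peq (0, s, t) (0, 1, -1)
          \<longrightarrow> Hrk curveC (0, s, t) = 2)
    \<and> Hrk curveC (0, 1, -1) = 3
    \<and> bHrk curveC (0, 1, -1) = 2
    \<and> hstar curveC curveC = projP2"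
proof (intro conjI)
  show "strongly_concise curveC"
    unfolding strongly_concise_def
  proof (intro allI impI)
    fix i :: nat assume "i \<le> 2"
    hence "i = 0 \<or> i = 1 \<or> i = 2" by auto
    thus "\<not> (curveC \<inter> hyp i \<subseteq> (\<Union>j\<in>{0,1,2} - {i}. hyp j))"
    proof (elim disjE)
      assume i: "i = 0"
      have "(0,1,1) \<in> curveC \<inter> hyp i" using i by (simp add: curveC_def hyp_def coord_def)
      moreover have "(0,1,1) \<notin> (\<Union>j\<in>{0,1,2} - {i}. hyp j)" using i by (auto simp: hyp_def coord_def)
      ultimately show ?thesis by blast
    next
      assume i: "i = 1"
      have "(1,0,-1) \<in> curveC \<inter> hyp i" using i by (simp add: curveC_def hyp_def coord_def)
      moreover have "(1,0,-1) \<notin> (\<Union>j\<in>{0,1,2} - {i}. hyp j)" using i by (auto simp: hyp_def coord_def)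
      ultimately show ?thesis by blast
    next
      assume i: "i = 2"
      have "(1,-1,0) \<in> curveC \<inter> hyp i" using i by (simp add: curveC_def hyp_def coord_def)
      moreover have "(1,-1,0) \<notin> (\<Union>j\<in>{0,1,2} - {i}. hyp j)" using i by (auto simp: hyp_def coord_def)
      ultimately show ?thesis by blast
    qed
  qed
next
  show "\<forall>v\<in>hyp 0. Hrk curveC v = 1 \<longleftrightarrow> peq v (0, 1, 1)"
  proof (intro ballI iffI)
    fix v assume v: "v \<in> hyp 0" and h: "Hrk curveC v = 1"
    let ?A = "{m. m \<ge> 1 \<and> (\<exists>ps. length ps = m \<and> set ps \<subseteq> curveC \<and> peq v (hprod_list ps))}"
    have "1 \<in> ?A"
    proof (rule ccontr)
      assume "1 \<notin> ?A"
      hence "\<forall>m\<in>?A. 2 \<le> m" by (auto simp: not_less_eq_eq)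
      hence "enat 2 \<le> Hrk curveC v" unfolding Hrk_def by (rule INF_enat_ge)
      thus False using h by (simp add: one_enat_def)
    qed
    then obtain ps where "length ps = 1" "set ps \<subseteq> curveC" "peq v (hprod_list ps)" by auto
    then obtain p where "p \<in> curveC" "peq v p" by (auto simp: length_Suc_conv hprod1)
    thus "peq v (0,1,1)" using rank1_H0 v by (auto simp: hyp_def)
  next
    fix v assume v: "v \<in> hyp 0" and h: "peq v (0,1,1)"
    have "Hrk curveC v = enat 1" unfolding Hrk_def
    proof (rule INF_enat_eq)
      show "1 \<in> {m. m \<ge> 1 \<and> (\<exists>ps. length ps = m \<and> set ps \<subseteq> curveC \<and> peq v (hprod_list ps))}"
        using h by (auto intro!: exI[of _ "[(0,1,1)]"] simp: hprod1 curveC_def)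
    qed auto
    thus "Hrk curveC v = 1" by (simp add: one_enat_def)
  qed
next
  show "\<forall>s t. (s, t) \<noteq> (0, 0) \<and> \<not> peq (0, s, t) (0, 1, 1) \<and> \<not> peq (0, s, t) (0, 1, -1)
          \<longrightarrow> Hrk curveC (0, s, t) = 2"
  proof (intro allI impI)
    fix s t :: complex
    assume h: "(s, t) \<noteq> (0, 0) \<and> \<not> peq (0, s, t) (0, 1, 1) \<and> \<not> peq (0, s, t) (0, 1, -1)"
    have st: "s + t \<noteq> 0"
    proof
      assume "s + t = 0"
      hence "t = -s" by (simp add: add_eq_0_iff)
      hence "(0,s,t) = smul s (0,1,-1)" "s \<noteq> 0" using h by (auto simp: smul_def)
      thus False using h by (auto simp: peq_def)
    qed
    let ?q = "(- ((s-t)^2) / (s+t), s, t)"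
    have qC: "?q \<in> curveC" using st h by (auto simp: curveC_def field_simps)
    have "Hrk curveC (0,s,t) = enat 2" unfolding Hrk_def
    proof (rule INF_enat_eq)
      have "hprod_list [(0,1,1), ?q] = (0,s,t)" by (simp add: hprod2 hmul_def)
      moreover have "(0,s,t) \<noteq> (0,0,0)" using h by auto
      ultimately show "2 \<in> {m. m \<ge> 1 \<and> (\<exists>ps. length ps = m \<and> set ps \<subseteq> curveC \<and> peq (0,s,t) (hprod_list ps))}"
        using qC by (auto intro!: exI[of _ "[(0,1,1), ?q]"] simp: curveC_def peq_refl)
    next
      show "\<forall>m\<in>{m. m \<ge> 1 \<and> (\<exists>ps. length ps = m \<and> set ps \<subseteq> curveC \<and> peq (0,s,t) (hprod_list ps))}. 2 \<le> m"
      proof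
        fix m assume "m \<in> {m. m \<ge> 1 \<and> (\<exists>ps. length ps = m \<and> set ps \<subseteq> curveC \<and> peq (0,s,t) (hprod_list ps))}"
        then obtain ps where m: "m \<ge> 1" "length ps = m" "set ps \<subseteq> curveC" "peq (0,s,t) (hprod_list ps)" by auto
        show "2 \<le> m"
        proof (rule ccontr)
          assume "\<not> 2 \<le> m"
          hence "m = 1" using m by simp
          then obtain p where "p \<in> curveC" "peq (0,s,t) p" using m by (auto simp: length_Suc_conv hprod1)
          hence "peq (0,s,t) (0,1,1)" using rank1_H0 by (auto simp: coord_def)
          thus False using h by simp
        qed
      qed
    qed
    thus "Hrk curveC (0,s,t) = 2" by (simp add: numeral_eq_enat)
  qed
next
  show "Hrk curveC (0, 1, -1) = 3"
  proof -
    let ?r = "(1+\<i>, 1, \<i>) :: v3"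
    have rC: "?r \<in> curveC" by (simp add: curveC_def power2_eq_square algebra_simps)
    have "Hrk curveC (0,1,-1) = enat 3" unfolding Hrk_def
    proof (rule INF_enat_eq)
      have "hprod_list [(0,1,1), ?r, ?r] = (0,1,-1)" by (simp add: hprod3 hmul_def)
      thus "3 \<in> {m. m \<ge> 1 \<and> (\<exists>ps. length ps = m \<and> set ps \<subseteq> curveC \<and> peq (0,1,-1) (hprod_list ps))}"
        using rC by (auto intro!: exI[of _ "[(0,1,1), ?r, ?r]"] simp: curveC_def peq_refl)
    next
      show "\<forall>m\<in>{m. m \<ge> 1 \<and> (\<exists>ps. length ps = m \<and> set ps \<subseteq> curveC \<and> peq (0,1,-1) (hprod_list ps))}. 3 \<le> m"
      proof
        fix m assume "m \<in> {m. m \<ge> 1 \<and> (\<exists>ps. length ps = m \<and> set ps \<subseteq> curveC \<and> peq (0,1,-1) (hprod_list ps))}"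
        then obtain ps where m: "m \<ge> 1" "length ps = m" "set ps \<subseteq> curveC" "peq (0,1,-1) (hprod_list ps)" by auto
        show "3 \<le> m"
        proof (rule ccontr)
          assume "\<not> 3 \<le> m"
          hence "m = 1 \<or> m = 2" using m by auto
          thus False
          proof
            assume "m = 1"
            then obtain p where "p \<in> curveC" "peq (0,1,-1) p" using m by (auto simp: length_Suc_conv hprod1)
            hence "peq (0,1,-1) (0,1,1)" using rank1_H0 by (auto simp: coord_def)
            thus False by (auto simp: peq_def smul_def)
          next
            assume "m = 2"
            hence "length ps = Suc (Suc 0)" using m(2) by simp
            then obtain p q where pq: "ps = [p,q]" by (auto simp: length_Suc_conv)
            hence "p \<in> curveC" "q \<in> curveC" using m(3) by simp_all
            moreover have "peq (0,1,-1) (hmul p q)" using m(4) pq by (simp only: hprod2)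
            ultimately show False using not_rank2_1m1 by blast
          qed
        qed
      qed
    qed
    thus ?thesis by (simp add: numeral_eq_enat)
  qed
next
  show "bHrk curveC (0, 1, -1) = 2"
  proof -
    have "bHrk curveC (0,1,-1) = enat 2" unfolding bHrk_def
    proof (rule INF_enat_eq)
      show "2 \<in> {m. m \<ge> 1 \<and> (0,1,-1) \<in> hpow curveC m}"
        by (simp add: numeral_2_eq_2 hstar_CC projP2_def)
    next
      show "\<forall>m\<in>{m. m \<ge> 1 \<and> (0,1,-1) \<in> hpow curveC m}. 2 \<le> m"
      proof
        fix m assume m: "m \<in> {m. m \<ge> 1 \<and> (0,1,-1) \<in> hpow curveC m}"
        show "2 \<le> m"
        proof (rule ccontr)
          assume "\<not> 2 \<le> m"
          hence "m = 1" using m by simp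
          thus False using m by (simp add: curveC_def)
        qed
      qed
    qed
    thus ?thesis by (simp add: numeral_eq_enat)
  qed
next
  show "hstar curveC curveC = projP2" by (rule hstar_CC)
qed

end
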